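(* Let $M$ be a $po$-$\Gamma$-semigroup. If $M$ is completely regular, then $B=(B\Gamma B]$ for every bi-ideal $B$ of $M$. Conversely, if $B=(B\Gamma B]$ for every bi-ideal $B$ of $M$, then $M$ is regular.
   Context: A $po$-$\Gamma$-semigroup is a triple $(M,\Gamma,\le)$ where $M,\Gamma$ are nonempty sets with a map $M\times\Gamma\times M\to M$, $(a,\gamma,b)\mapsto a\gamma b$, satisfying $(a\gamma b)\mu c=a\gamma(b\mu c)$ for all $a,b,c\in M$, $\gamma,\mu\in\Gamma$, and $\le$ is a partial order on $M$ such that $a\le b$ implies $a\gamma c\le b\gamma c$ and $c\gamma a\le c\gamma b$ for all $c\in M$, $\gamma\in\Gamma$. For $A,B\subseteq M$, $A\Gamma B=\{a\gamma b: a\in A,\gamma\in\Gamma,b\in B\}$ (with $a\Gamma B$ meaning $\{a\}\Gamma B$, etc.), and $(A]=\{t\in M: t\le a \text{ for some } a\in A\}$. $M$ is regular if $a\in(a\Gamma M\Gamma a]$ for all $a\in M$; left regular if $a\in(M\Gamma a\Gamma a]$ for all $a\in M$; right regular if $a\in(a\Gamma a\Gamma M]$ for all $a\in M$; completely regular if it is regular, left regular and right regular. A bi-ideal of $M$ is a nonempty subset $B\subseteq M$ such that $B\Gamma M\Gamma B\subseteq B$ and, whenever $a\in B$, $b\in M$ and $b\le a$, then $b\in B$. *)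

theory Defs
  imports Main
begin

definition po_gamma_semigroup ::
  "'m set \<Rightarrow> 'g set \<Rightarrow> ('m \<Rightarrow> 'g \<Rightarrow> 'm \<Rightarrow> 'm) \<Rightarrow> ('m \<Rightarrow> 'm \<Rightarrow> bool) \<Rightarrow> bool" where
  "po_gamma_semigroup M G op le \<longleftrightarrow>
     M \<noteq> {} \<and> G \<noteq> {} \<and>
     (\<forall>a\<in>M. \<forall>g\<in>G. \<forall>b\<in>M. op a g b \<in> M) \<and>
     (\<forall>a\<in>M. \<forall>b\<in>M. \<forall>c\<in>M. \<forall>g\<in>G. \<forall>m\<in>G. op (op a g b) m c = op a g (op b m c)) \<and>
     (\<forall>a\<in>M. le a a) \<and>
     (\<forall>a\<in>M. \<forall>b\<in>M. le a b \<and> le b a \<longrightarrow> a = b) \<and>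
     (\<forall>a\<in>M. \<forall>b\<in>M. \<forall>c\<in>M. le a b \<and> le b c \<longrightarrow> le a c) \<and>
     (\<forall>a\<in>M. \<forall>b\<in>M. le a b \<longrightarrow> (\<forall>c\<in>M. \<forall>g\<in>G. le (op a g c) (op b g c) \<and> le (op c g a) (op c g b)))"

definition gprod :: "('m \<Rightarrow> 'g \<Rightarrow> 'm \<Rightarrow> 'm) \<Rightarrow> 'm set \<Rightarrow> 'g set \<Rightarrow> 'm set \<Rightarrow> 'm set" where
  "gprod op A G B = {op a g b | a g b. a \<in> A \<and> g \<in> G \<and> b \<in> B}"

definition down :: "'m set \<Rightarrow> ('m \<Rightarrow> 'm \<Rightarrow> bool) \<Rightarrow> 'm set \<Rightarrow> 'm set" where
  "down M le A = {t \<in> M. \<exists>a\<in>A. le t a}"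

definition regular_pogs where
  "regular_pogs M G op le \<longleftrightarrow>
     (\<forall>a\<in>M. a \<in> down M le (gprod op (gprod op {a} G M) G {a}))"

definition left_regular_pogs where
  "left_regular_pogs M G op le \<longleftrightarrow>
     (\<forall>a\<in>M. a \<in> down M le (gprod op (gprod op M G {a}) G {a}))"

definition right_regular_pogs where
  "right_regular_pogs M G op le \<longleftrightarrow>
     (\<forall>a\<in>M. a \<in> down M le (gprod op (gprod op {a} G {a}) G M))"

definition completely_regular_pogs where
  "completely_regular_pogs M G op le \<longleftrightarrow>
     regular_pogs M G op le \<and> left_regular_pogs M G op le \<and> right_regular_pogs M G op le"

definition bi_ideal where
  "bi_ideal M G op le B \<longleftrightarrow>
     B \<subseteq> M \<and> B \<noteq> {} \<and>
     gprod op (gprod op B G M) G B \<subseteq> B \<and>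
     (\<forall>a\<in>B. \<forall>b\<in>M. le b a \<longrightarrow> b \<in> B)"

end

theory Submission
  imports Defs
begin

context
  fixes M :: "'m set" and G :: "'g set" and op :: "'m \<Rightarrow> 'g \<Rightarrow> 'm \<Rightarrow> 'm"
    and le :: "'m \<Rightarrow> 'm \<Rightarrow> bool"
  assumes pg: "po_gamma_semigroup M G op le"
begin

lemma pgd0: "M \<noteq> {}"
  using pg unfolding po_gamma_semigroup_def by (elim conjE) assumption

lemma pgd1: "G \<noteq> {}"
  using pg unfolding po_gamma_semigroup_def by (elim conjE) assumption

lemma pgd2: "(\<forall>a\<in>M. \<forall>g\<in>G. \<forall>b\<in>M. op a g b \<in> M)"
  using pg unfolding po_gamma_semigroup_def by (elim conjE) assumption

lemma pgd3: "(\<forall>a\<in>M. \<forall>b\<in>M. \<forall>c\<in>M. \<forall>g\<in>G. \<forall>m\<in>G. op (op a g b) m c = op a g (op b m c))"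
  using pg unfolding po_gamma_semigroup_def by (elim conjE) assumption

lemma pgd4: "(\<forall>a\<in>M. le a a)"
  using pg unfolding po_gamma_semigroup_def by (elim conjE) assumption

lemma pgd5: "(\<forall>a\<in>M. \<forall>b\<in>M. le a b \<and> le b a \<longrightarrow> a = b)"
  using pg unfolding po_gamma_semigroup_def by (elim conjE) assumption

lemma pgd6: "(\<forall>a\<in>M. \<forall>b\<in>M. \<forall>c\<in>M. le a b \<and> le b c \<longrightarrow> le a c)"
  using pg unfolding po_gamma_semigroup_def by (elim conjE) assumption

lemma pgd7: "(\<forall>a\<in>M. \<forall>b\<in>M. le a b \<longrightarrow> (\<forall>c\<in>M. \<forall>g\<in>G. le (op a g c) (op b g c) \<and> le (op c g a) (op c g b)))"
  using pg unfolding po_gamma_semigroup_def by (elim conjE) assumption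

lemmas pgd = pgd0 pgd1 pgd2 pgd3 pgd4 pgd5 pgd6 pgd7

lemma cl[simp]: "a \<in> M \<Longrightarrow> g \<in> G \<Longrightarrow> b \<in> M \<Longrightarrow> op a g b \<in> M"
  using pgd2 by blast

lemma asc: "a \<in> M \<Longrightarrow> b \<in> M \<Longrightarrow> c \<in> M \<Longrightarrow> g \<in> G \<Longrightarrow> m \<in> G \<Longrightarrow>
   op (op a g b) m c = op a g (op b m c)"
  using pgd3 by blast

lemma tr: "a \<in> M \<Longrightarrow> b \<in> M \<Longrightarrow> c \<in> M \<Longrightarrow> le a b \<Longrightarrow> le b c \<Longrightarrow> le a c"
  using pgd6 by blast

lemma rfl: "a \<in> M \<Longrightarrow> le a a"
  using pgd4 by blast

lemma ml: "a \<in> M \<Longrightarrow> b \<in> M \<Longrightarrow> c \<in> M \<Longrightarrow> g \<in> G \<Longrightarrow> le a b \<Longrightarrow> le (op a g c) (op b g c)"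
  using pgd7 by blast

lemma mr: "a \<in> M \<Longrightarrow> b \<in> M \<Longrightarrow> c \<in> M \<Longrightarrow> g \<in> G \<Longrightarrow> le a b \<Longrightarrow> le (op c g a) (op c g b)"
  using pgd7 by blast

lemma m2: "a \<in> M \<Longrightarrow> b \<in> M \<Longrightarrow> c \<in> M \<Longrightarrow> d \<in> M \<Longrightarrow> g \<in> G \<Longrightarrow> le a b \<Longrightarrow> le c d
   \<Longrightarrow> le (op a g c) (op b g d)"
  by (meson cl ml mr tr)

lemma bi_mem: "bi_ideal M G op le B \<Longrightarrow> b \<in> B \<Longrightarrow> x \<in> M \<Longrightarrow> b' \<in> B \<Longrightarrow> g \<in> G \<Longrightarrow> h \<in> G
   \<Longrightarrow> op (op b g x) h b' \<in> B"
  unfolding bi_ideal_def gprod_def by blast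

lemma bi_down: "bi_ideal M G op le B \<Longrightarrow> b \<in> B \<Longrightarrow> x \<in> M \<Longrightarrow> le x b \<Longrightarrow> x \<in> B"
  unfolding bi_ideal_def by blast

lemma bi_sub: "bi_ideal M G op le B \<Longrightarrow> b \<in> B \<Longrightarrow> b \<in> M"
  unfolding bi_ideal_def by blast

lemma rr: "right_regular_pogs M G op le \<Longrightarrow> b \<in> M \<Longrightarrow>
   \<exists>e\<in>G. \<exists>z\<in>G. \<exists>w\<in>M. le b (op (op b e b) z w)"
  unfolding right_regular_pogs_def down_def gprod_def by blast

lemma lr: "left_regular_pogs M G op le \<Longrightarrow> b \<in> M \<Longrightarrow>
   \<exists>e\<in>G. \<exists>z\<in>G. \<exists>w\<in>M. le b (op (op w e b) z b)"
  unfolding left_regular_pogs_def down_def gprod_def by blast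

lemma rg: "regular_pogs M G op le \<Longrightarrow> b \<in> M \<Longrightarrow>
   \<exists>e\<in>G. \<exists>z\<in>G. \<exists>w\<in>M. le b (op (op b e w) z b)"
  unfolding regular_pogs_def down_def gprod_def by blast

lemma BB: assumes "right_regular_pogs M G op le" "bi_ideal M G op le B" "b \<in> B" "b' \<in> B" "g \<in> G"
  shows "op b g b' \<in> B"
proof -
  have bM: "b \<in> M" "b' \<in> M" using assms bi_sub by auto
  obtain e z w where ez: "e \<in> G" "z \<in> G" "w \<in> M" "le b (op (op b e b) z w)"
    using rr assms(1) bM by blast
  have "le (op b g b') (op (op (op b e b) z w) g b')"
    using ml ez bM assms(5) by simp
  moreover have "op (op (op b e b) z w) g b' = op (op b e (op b z w)) g b'"
    using asc ez bM assms(5) by simp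
  moreover have "op (op b e (op b z w)) g b' \<in> B"
    using bi_mem assms ez bM by simp
  ultimately show ?thesis using bi_down[OF assms(2)] cl[OF bM(1) assms(5) bM(2)] by metis
qed

lemma part1: assumes "completely_regular_pogs M G op le" "bi_ideal M G op le B"
  shows "B = down M le (gprod op B G B)"
proof
  show "down M le (gprod op B G B) \<subseteq> B"
  proof
    fix x assume "x \<in> down M le (gprod op B G B)"
    then obtain b g b' where x: "x \<in> M" "b \<in> B" "g \<in> G" "b' \<in> B" "le x (op b g b')"
      unfolding down_def gprod_def by blast
    have cr: "right_regular_pogs M G op le" using assms(1) unfolding completely_regular_pogs_def by blast
    have "op b g b' \<in> B" using BB[OF cr assms(2) x(2) x(4) x(3)] .
    then show "x \<in> B" using bi_down[OF assms(2) _ x(1) x(5)] by blast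
  qed
next
  show "B \<subseteq> down M le (gprod op B G B)"
  proof
    fix b assume bB: "b \<in> B"
    have bM: "b \<in> M" using bi_sub assms bB by blast
    obtain a1 a2 x where r: "a1 \<in> G" "a2 \<in> G" "x \<in> M" "le b (op (op b a1 x) a2 b)"
      using rg assms(1) bM unfolding completely_regular_pogs_def by blast
    obtain e z y where l: "e \<in> G" "z \<in> G" "y \<in> M" "le b (op (op y e b) z b)"
      using lr assms(1) bM unfolding completely_regular_pogs_def by blast
    have "le (op (op b a1 x) a2 b) (op (op b a1 x) a2 (op (op y e b) z b))"
      using mr r l bM by simp
    moreover have "op (op b a1 x) a2 (op (op y e b) z b) = op (op (op b a1 (op x a2 y)) e b) z b"
      using asc r l bM by simp
    ultimately have le1: "le b (op (op (op b a1 (op x a2 y)) e b) z b)"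
      using tr[OF bM _ _ r(4)] r l bM by simp
    have "op (op b a1 (op x a2 y)) e b \<in> B" using bi_mem[OF assms(2) bB _ bB r(1) l(1)] r l bM by simp
    then show "b \<in> down M le (gprod op B G B)"
      unfolding down_def gprod_def using bM le1 bB l by blast
  qed
qed

definition isA :: "'m \<Rightarrow> 'm \<Rightarrow> bool" where
  "isA a w \<longleftrightarrow> (\<exists>\<alpha>\<in>G. \<exists>x\<in>M. \<exists>\<beta>\<in>G. w = op (op a \<alpha> x) \<beta> a)"

lemma Ldec: assumes "a \<in> M" "m \<in> M" "g \<in> G" "p = a \<or> isA a p"
  shows "\<exists>\<alpha>\<in>G. \<exists>x\<in>M. op p g m = op a \<alpha> x"
  using assms(4)
proof
  assume "p = a" then show ?thesis using assms by blast
next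
  assume "isA a p"
  then obtain \<alpha> x \<beta> where h: "\<alpha>\<in>G" "x\<in>M" "\<beta>\<in>G" "p = op (op a \<alpha> x) \<beta> a"
    unfolding isA_def by blast
  have "op p g m = op a \<alpha> (op x \<beta> (op a g m))" using h assms asc by simp
  then show ?thesis using h assms by (meson cl)
qed

lemma Rdec: assumes "a \<in> M" "m \<in> M" "g \<in> G" "p = a \<or> isA a p"
  shows "\<exists>\<beta>\<in>G. \<exists>x\<in>M. op m g p = op x \<beta> a"
  using assms(4)
proof
  assume "p = a" then show ?thesis using assms by blast
next
  assume "isA a p"
  then obtain \<alpha> x \<beta> where h: "\<alpha>\<in>G" "x\<in>M" "\<beta>\<in>G" "p = op (op a \<alpha> x) \<beta> a"
    unfolding isA_def by blast
  have "op m g p = op (op (op m g a) \<alpha> x) \<beta> a" using h assms asc by simp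
  then show ?thesis using h assms by (meson cl)
qed

lemma isA_M: "a \<in> M \<Longrightarrow> p = a \<or> isA a p \<Longrightarrow> p \<in> M"
  unfolding isA_def by auto

lemma trip: assumes "a \<in> M" "m \<in> M" "g \<in> G" "h \<in> G" "p = a \<or> isA a p" "q = a \<or> isA a q"
  shows "isA a (op (op p g m) h q)"
proof -
  obtain \<alpha> x where 1: "\<alpha>\<in>G" "x\<in>M" "op p g m = op a \<alpha> x" using Ldec assms by blast
  obtain \<beta> y where 2: "\<beta>\<in>G" "y\<in>M" "op x h q = op y \<beta> a" using Rdec assms 1 by blast
  have "op (op p g m) h q = op a \<alpha> (op x h q)" using 1 assms asc isA_M by simp
  also have "\<dots> = op (op a \<alpha> y) \<beta> a" using 2 1 assms asc by simp
  finally show ?thesis unfolding isA_def using 1 2 by blast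
qed

lemma pair: assumes "a \<in> M" "g \<in> G" "p = a \<or> isA a p" "q = a \<or> isA a q" "isA a p \<or> isA a q"
  shows "isA a (op p g q)"
  using assms(5)
proof
  assume "isA a p"
  then obtain \<alpha> x \<beta> where h: "\<alpha>\<in>G" "x\<in>M" "\<beta>\<in>G" "p = op (op a \<alpha> x) \<beta> a"
    unfolding isA_def by blast
  have "op p g q = op (op a \<alpha> (op x \<beta> a)) g q" using h assms asc by simp
  then show ?thesis using trip[of a "op x \<beta> a" \<alpha> g a q] h assms by simp
next
  assume "isA a q"
  then obtain \<alpha> x \<beta> where h: "\<alpha>\<in>G" "x\<in>M" "\<beta>\<in>G" "q = op (op a \<alpha> x) \<beta> a"
    unfolding isA_def by blast
  have pM: "p \<in> M" using isA_M assms by blast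
  have "op p g q = op (op p g (op a \<alpha> x)) \<beta> a" using h assms asc pM by simp
  then show ?thesis using trip[of a "op a \<alpha> x" g \<beta> p a] h assms by simp
qed

lemma part2: assumes H: "\<forall>B. bi_ideal M G op le B \<longrightarrow> B = down M le (gprod op B G B)"
  shows "regular_pogs M G op le"
  unfolding regular_pogs_def
proof
  fix a assume aM: "a \<in> M"
  define B where "B = {u \<in> M. \<exists>p. (p = a \<or> isA a p) \<and> le u p}"
  have Bd: "u \<in> B \<Longrightarrow> \<exists>p. (p = a \<or> isA a p) \<and> le u p \<and> u \<in> M \<and> p \<in> M" for u
    unfolding B_def using isA_M aM by blast
  have aB: "a \<in> B" unfolding B_def using aM rfl by blast
  have bi: "bi_ideal M G op le B"
    unfolding bi_ideal_def
  proof (intro conjI ballI allI impI)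
    show "B \<subseteq> M" unfolding B_def by blast
    show "B \<noteq> {}" using aB by blast
    show "gprod op (gprod op B G M) G B \<subseteq> B"
    proof
      fix w assume "w \<in> gprod op (gprod op B G M) G B"
      then obtain u g m h v where w: "u \<in> B" "g \<in> G" "m \<in> M" "h \<in> G" "v \<in> B"
        "w = op (op u g m) h v" unfolding gprod_def by blast
      obtain p where p: "p = a \<or> isA a p" "le u p" "u \<in> M" "p \<in> M" using Bd w by blast
      obtain q where q: "q = a \<or> isA a q" "le v q" "v \<in> M" "q \<in> M" using Bd w by blast
      have "le (op u g m) (op p g m)" using ml p w by simp
      then have "le w (op (op p g m) h q)" using m2 p q w by simp
      moreover have "isA a (op (op p g m) h q)" using trip aM p q w by simp
      ultimately show "w \<in> B" unfolding B_def using w p q by auto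
    qed
  next
    fix x y assume "x \<in> B" "y \<in> M" "le y x"
    then show "y \<in> B" unfolding B_def using tr isA_M aM by blast
  qed
  have "a \<in> down M le (gprod op B G B)" using H bi aB by blast
  then obtain u g v where uv: "u \<in> B" "g \<in> G" "v \<in> B" "le a (op u g v)"
    unfolding down_def gprod_def by blast
  obtain p where p: "p = a \<or> isA a p" "le u p" "u \<in> M" "p \<in> M" using Bd uv by blast
  obtain q where q: "q = a \<or> isA a q" "le v q" "v \<in> M" "q \<in> M" using Bd uv by blast
  have le1: "le a (op p g q)" using m2 p q uv tr aM by (meson cl)
  have "isA a (op p g q) \<or> (p = a \<and> q = a)" using pair aM uv p q by blast
  then have "isA a (op p g q) \<or> isA a (op (op a g a) g a)"
  proof
    assume "p = a \<and> q = a"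
    then show ?thesis unfolding isA_def using aM uv by blast
  qed simp
  then obtain t where t: "isA a t" "le a t"
  proof
    assume "isA a (op p g q)" then show thesis using that le1 by blast
  next
    assume A: "isA a (op (op a g a) g a)"
    show thesis
    proof (cases "isA a (op p g q)")
      case True then show ?thesis using that le1 by blast
    next
      case False
      then have "p = a" "q = a" using pair aM uv p q by blast+
      then have l: "le a (op a g a)" using le1 by simp
      have "le (op a g a) (op (op a g a) g a)" using ml l aM uv by simp
      then show ?thesis using that A tr l aM uv by (meson cl)
    qed
  qed
  then show "a \<in> down M le (gprod op (gprod op {a} G M) G {a})"
    unfolding down_def gprod_def isA_def using aM by blast
qed

end

theorem proposition6:
  fixes M :: "'m set" and G :: "'g set" and op :: "'m \<Rightarrow> 'g \<Rightarrow> 'm \<Rightarrow> 'm"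
    and le :: "'m \<Rightarrow> 'm \<Rightarrow> bool"
  assumes "po_gamma_semigroup M G op le"
  shows "(completely_regular_pogs M G op le \<longrightarrow>
           (\<forall>B. bi_ideal M G op le B \<longrightarrow> B = down M le (gprod op B G B)))
       \<and> ((\<forall>B. bi_ideal M G op le B \<longrightarrow> B = down M le (gprod op B G B))
           \<longrightarrow> regular_pogs M G op le)"
  using part1[OF assms] part2[OF assms] by blast

end
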